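(* For an infinite Boolean algebra $A$, $\mathrm{aut}(A)\leq\mathrm{sub}(A)$.
   Context: $\mathrm{aut}(A)$ is the number of automorphisms of $A$ and $\mathrm{sub}(A)$ is the number of subalgebras of $A$. *)

theory Defs
  imports Main
begin

unbundle cardinal_syntax

definition ba_automorphisms :: "('a::boolean_algebra \<Rightarrow> 'a) set" where
  "ba_automorphisms = {f. bij f
      \<and> (\<forall>x y. f (sup x y) = sup (f x) (f y))
      \<and> (\<forall>x y. f (inf x y) = inf (f x) (f y))
      \<and> (\<forall>x. f (- x) = - f x)
      \<and> f bot = bot \<and> f top = top}"

definition ba_subalgebras :: "'a::boolean_algebra set set" where
  "ba_subalgebras = {S. bot \<in> S \<and> top \<in> S
      \<and> (\<forall>x\<in>S. \<forall>y\<in>S. sup x y \<in> S)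
      \<and> (\<forall>x\<in>S. \<forall>y\<in>S. inf x y \<in> S)
      \<and> (\<forall>x\<in>S. - x \<in> S)}"

end

theory Submission
  imports Defs
begin


lemma ba_split_eq:
  fixes y a b :: "'a::boolean_algebra"
  assumes "inf y a = inf y b" "inf (- y) a = inf (- y) b"
  shows "a = b"
proof -
  have "a = sup (inf y a) (inf (-y) a)"
    by (metis inf_commute inf_sup_distrib1 inf_top_right sup_compl_top)
  also have "\<dots> = sup (inf y b) (inf (-y) b)" using assms by simp
  also have "\<dots> = b"
    by (metis inf_commute inf_sup_distrib1 inf_top_right sup_compl_top)
  finally show ?thesis .
qed

lemma t1: fixes y p q :: "'a::boolean_algebra"
  shows "inf y (sup (inf y p) (inf (-y) q)) = inf y p"
   "inf (-y) (sup (inf y p) (inf (-y) q)) = inf (-y) q"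
  by (simp_all add: inf_sup_distrib1 inf_assoc[symmetric])

lemma t3: fixes y x z :: "'a::boolean_algebra"
  shows "inf y (inf x z) = inf (inf y x) (inf y z)"
  "inf y (- x) = inf y (- (inf y x))"
  apply (metis inf.left_idem inf_assoc inf_left_commute)
  by (simp add: inf_sup_distrib1)

lemma t2a: fixes y p q p2 q2 :: "'a::boolean_algebra"
  shows "sup (sup (inf y p) (inf (-y) q)) (sup (inf y p2) (inf (-y) q2)) = sup (inf y (sup p p2)) (inf (-y) (sup q q2))"
proof (rule ba_split_eq[of y])
  show "inf y (sup (sup (inf y p) (inf (-y) q)) (sup (inf y p2) (inf (-y) q2))) = inf y (sup (inf y (sup p p2)) (inf (-y) (sup q q2)))"
    by (simp only: inf_sup_distrib1[of y "sup _ _"] t1) (simp add: inf_sup_distrib1)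
  show "inf (-y) (sup (sup (inf y p) (inf (-y) q)) (sup (inf y p2) (inf (-y) q2))) = inf (-y) (sup (inf y (sup p p2)) (inf (-y) (sup q q2)))"
    by (simp only: inf_sup_distrib1[of "-y" "sup _ _"] t1) (simp add: inf_sup_distrib1)
qed

lemma t2b: fixes y p q p2 q2 :: "'a::boolean_algebra"
  shows "inf (sup (inf y p) (inf (-y) q)) (sup (inf y p2) (inf (-y) q2)) = sup (inf y (inf p p2)) (inf (-y) (inf q q2))"
proof (rule ba_split_eq[of y])
  show "inf y (inf (sup (inf y p) (inf (-y) q)) (sup (inf y p2) (inf (-y) q2))) = inf y (sup (inf y (inf p p2)) (inf (-y) (inf q q2)))"
    by (simp only: t3(1)[of y "sup _ _"] t1) (metis t3(1))
  show "inf (-y) (inf (sup (inf y p) (inf (-y) q)) (sup (inf y p2) (inf (-y) q2))) = inf (-y) (sup (inf y (inf p p2)) (inf (-y) (inf q q2)))"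
    by (simp only: t3(1)[of "-y" "sup _ _"] t1) (metis t3(1))
qed

lemma t2c: fixes y p q :: "'a::boolean_algebra"
  shows "- (sup (inf y p) (inf (-y) q)) = sup (inf y (-p)) (inf (-y) (-q))"
proof (rule ba_split_eq[of y])
  show "inf y (- (sup (inf y p) (inf (-y) q))) = inf y (sup (inf y (-p)) (inf (-y) (-q)))"
    by (simp only: t3(2)[of y "sup _ _"] t1) (metis t3(2))
  show "inf (-y) (- (sup (inf y p) (inf (-y) q))) = inf (-y) (sup (inf y (-p)) (inf (-y) (-q)))"
    by (simp only: t3(2)[of "-y" "sup _ _"] t1) (metis t3(2))
qed


definition gen :: "'a::boolean_algebra set \<Rightarrow> 'a set" where
  "gen S = \<Inter>{T \<in> ba_subalgebras. S \<subseteq> T}"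

lemma sub_UNIV: "(UNIV::'a::boolean_algebra set) \<in> ba_subalgebras"
  unfolding ba_subalgebras_def by auto

lemma gen_sub: "gen S \<in> ba_subalgebras"
  unfolding gen_def ba_subalgebras_def by auto

lemma gen_incl: "S \<subseteq> gen S"
  unfolding gen_def by auto

lemma gen_least: "T \<in> ba_subalgebras \<Longrightarrow> S \<subseteq> T \<Longrightarrow> gen S \<subseteq> T"
  unfolding gen_def by auto

lemma gen_mono: "S \<subseteq> S' \<Longrightarrow> gen S \<subseteq> gen S'"
  by (meson gen_incl gen_least gen_sub order_trans)

lemma subD:
  assumes "T \<in> ba_subalgebras"
  shows "bot \<in> T" "top \<in> T" "x \<in> T \<Longrightarrow> y \<in> T \<Longrightarrow> sup x y \<in> T"
    "x \<in> T \<Longrightarrow> y \<in> T \<Longrightarrow> inf x y \<in> T" "x \<in> T \<Longrightarrow> - x \<in> T"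
  using assms unfolding ba_subalgebras_def by auto

lemma subI:
  assumes "bot \<in> T" "top \<in> T" "\<And>x y. x \<in> T \<Longrightarrow> y \<in> T \<Longrightarrow> sup x y \<in> T"
    "\<And>x y. x \<in> T \<Longrightarrow> y \<in> T \<Longrightarrow> inf x y \<in> T" "\<And>x. x \<in> T \<Longrightarrow> - x \<in> T"
  shows "T \<in> ba_subalgebras"
  using assms unfolding ba_subalgebras_def by auto

lemma gen_insert:
  "gen (insert y S) \<subseteq> {sup (inf y p) (inf (-y) q) | p q. p \<in> gen S \<and> q \<in> gen S}"
  (is "_ \<subseteq> ?R")
proof (rule gen_least)
  have G: "gen S \<in> ba_subalgebras" by (rule gen_sub)
  show "?R \<in> ba_subalgebras"
  proof (rule subI)
    show "bot \<in> ?R"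
      by (rule CollectI, rule exI[of _ bot], rule exI[of _ bot]) (simp add: subD[OF G])
    show "top \<in> ?R"
      by (rule CollectI, rule exI[of _ top], rule exI[of _ top]) (simp add: subD[OF G])
    fix a b assume "a \<in> ?R" "b \<in> ?R"
    then obtain p q p2 q2 where a: "a = sup (inf y p) (inf (-y) q)" "p \<in> gen S" "q \<in> gen S"
      and b: "b = sup (inf y p2) (inf (-y) q2)" "p2 \<in> gen S" "q2 \<in> gen S" by blast
    show "sup a b \<in> ?R" unfolding a b t2a using subD[OF G] a b by blast
  next
    fix a b assume "a \<in> ?R" "b \<in> ?R"
    then obtain p q p2 q2 where a: "a = sup (inf y p) (inf (-y) q)" "p \<in> gen S" "q \<in> gen S"
      and b: "b = sup (inf y p2) (inf (-y) q2)" "p2 \<in> gen S" "q2 \<in> gen S" by blast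
    show "inf a b \<in> ?R" unfolding a b t2b using subD[OF G] a b by blast
  next
    fix a assume "a \<in> ?R"
    then obtain p q where a: "a = sup (inf y p) (inf (-y) q)" "p \<in> gen S" "q \<in> gen S" by blast
    show "- a \<in> ?R" unfolding a t2c using subD[OF G] a by blast
  qed
  show "insert y S \<subseteq> ?R"
  proof
    fix x assume "x \<in> insert y S"
    then show "x \<in> ?R"
    proof
      assume "x = y"
      then have "x = sup (inf y top) (inf (-y) bot)" by simp
      then show ?thesis using subD[OF G] by blast
    next
      assume "x \<in> S"
      have "x = sup (inf y x) (inf (-y) x)"
        by (metis inf_commute inf_sup_distrib1 inf_top_right sup_compl_top)
      then show ?thesis using \<open>x \<in> S\<close> gen_incl by blast
    qed
  qed
qed

lemma finite_gen: "finite S \<Longrightarrow> finite (gen S)"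
proof (induction S rule: finite_induct)
  case empty
  have "gen {} \<subseteq> {bot, top}"
    by (rule gen_least) (auto simp: ba_subalgebras_def)
  then show ?case using finite_subset by blast
next
  case (insert y S)
  have "gen (insert y S) \<subseteq> (\<lambda>(p,q). sup (inf y p) (inf (-y) q)) ` (gen S \<times> gen S)"
  proof
    fix x assume "x \<in> gen (insert y S)"
    then obtain p q where "x = sup (inf y p) (inf (-y) q)" "p \<in> gen S" "q \<in> gen S"
      using gen_insert by blast
    then show "x \<in> (\<lambda>(p,q). sup (inf y p) (inf (-y) q)) ` (gen S \<times> gen S)" by force
  qed
  then show ?case using insert finite_subset by blast
qed

lemma gen_Un_left: "a \<in> gen F \<Longrightarrow> a \<in> gen (F \<union> G)"
  using gen_mono[of F "F \<union> G"] by blast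
lemma gen_Un_right: "a \<in> gen G \<Longrightarrow> a \<in> gen (F \<union> G)"
  using gen_mono[of G "F \<union> G"] by blast

lemma gen_finite_char:
  "gen S = (\<Union>F\<in>{F. F \<subseteq> S \<and> finite F}. gen F)" (is "_ = ?U")
proof
  show "?U \<subseteq> gen S"
  proof
    fix x assume "x \<in> ?U"
    then obtain F where "F \<subseteq> S" "x \<in> gen F" by blast
    then show "x \<in> gen S" using gen_mono by blast
  qed
  show "gen S \<subseteq> ?U"
  proof (rule gen_least)
    show "S \<subseteq> ?U"
    proof
      fix x assume "x \<in> S"
      then have "{x} \<subseteq> S" "finite {x}" "x \<in> gen {x}" using gen_incl by auto
      then show "x \<in> ?U" by blast
    qed
    show "?U \<in> ba_subalgebras"
    proof (rule subI)
      have "{} \<subseteq> S" "finite {}" by auto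
      then show "bot \<in> ?U" "top \<in> ?U" using subD(1,2)[OF gen_sub, of "{}"] by blast+
    next
      fix a b assume "a \<in> ?U" "b \<in> ?U"
      then obtain F G where F: "F \<subseteq> S" "finite F" "a \<in> gen F" and G: "G \<subseteq> S" "finite G" "b \<in> gen G"
        by blast
      have "sup a b \<in> gen (F \<union> G)" using subD(3)[OF gen_sub] gen_Un_left[OF F(3)] gen_Un_right[OF G(3)] by blast
      moreover have "F \<union> G \<subseteq> S" "finite (F \<union> G)" using F G by auto
      ultimately show "sup a b \<in> ?U" by blast
    next
      fix a b assume "a \<in> ?U" "b \<in> ?U"
      then obtain F G where F: "F \<subseteq> S" "finite F" "a \<in> gen F" and G: "G \<subseteq> S" "finite G" "b \<in> gen G"
        by blast
      have "inf a b \<in> gen (F \<union> G)" using subD(4)[OF gen_sub] gen_Un_left[OF F(3)] gen_Un_right[OF G(3)] by blast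
      moreover have "F \<union> G \<subseteq> S" "finite (F \<union> G)" using F G by auto
      ultimately show "inf a b \<in> ?U" by blast
    next
      fix a assume "a \<in> ?U"
      then obtain H where "H \<subseteq> S" "finite H" "a \<in> gen H" by blast
      moreover then have "- a \<in> gen H" using subD(5)[OF gen_sub] by blast
      ultimately show "- a \<in> ?U" by blast
    qed
  qed
qed


definition irr :: "'a::boolean_algebra set \<Rightarrow> bool" where
  "irr X \<longleftrightarrow> (\<forall>x\<in>X. x \<notin> gen (X - {x}))"

lemma chain_finite_bound:
  assumes "C \<in> chains A" "finite F" "F \<subseteq> \<Union>C" "C \<noteq> {}"
  shows "\<exists>Y\<in>C. F \<subseteq> Y"
proof -
  have "subset.chain A C" using assms(1) unfolding chains_def chain_subset_def subset.chain_def by auto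
  then show ?thesis using finite_subset_Union_chain[OF assms(2,3,4)] by metis
qed

lemma irr_chain:
  assumes "C \<in> chains {X. irr X}"
  shows "irr (\<Union>C)"
  unfolding irr_def
proof
  fix x assume x: "x \<in> \<Union>C"
  show "x \<notin> gen (\<Union>C - {x})"
  proof
    assume "x \<in> gen (\<Union>C - {x})"
    then obtain F where F: "F \<subseteq> \<Union>C - {x}" "finite F" "x \<in> gen F"
      using gen_finite_char[of "\<Union>C - {x}"] by blast
    have "finite (insert x F)" "insert x F \<subseteq> \<Union>C" "C \<noteq> {}" using F x by auto
    then obtain Y where Y: "Y \<in> C" "insert x F \<subseteq> Y" using chain_finite_bound[OF assms] by blast
    have "irr Y" using Y(1) assms unfolding chains_def by auto
    moreover have "F \<subseteq> Y - {x}" using F Y by auto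
    then have "x \<in> gen (Y - {x})" using gen_mono F(3) by blast
    ultimately show False using Y unfolding irr_def by auto
  qed
qed

lemma max_irr_exists: "\<exists>X. irr X \<and> (\<forall>Y. irr Y \<longrightarrow> X \<subseteq> Y \<longrightarrow> Y = X)"
proof -
  have "\<forall>C\<in>chains {X::'a set. irr X}. \<Union>C \<in> {X. irr X}" using irr_chain by blast
  from Zorn_Lemma[OF this] show ?thesis by blast
qed

lemma gen_decomp:
  assumes "x \<in> gen (insert y S)"
  obtains p q where "x = sup (inf y p) (inf (-y) q)" "p \<in> gen S" "q \<in> gen S"
  using gen_insert assms by blast



lemma max_irr_dense:
  assumes irrX: "irr X" and maxX: "\<forall>Y. irr Y \<longrightarrow> X \<subseteq> Y \<longrightarrow> Y = X"
    and a: "a \<noteq> bot"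
  shows "\<exists>d\<in>gen X. d \<noteq> bot \<and> d \<le> a"
proof (rule ccontr)
  assume nd: "\<not> (\<exists>d\<in>gen X. d \<noteq> bot \<and> d \<le> a)"
  have aX: "a \<notin> gen X" using nd a by blast
  then have anX: "a \<notin> X" using gen_incl by blast
  have "irr (insert a X)"
    unfolding irr_def
  proof
    fix x assume x: "x \<in> insert a X"
    show "x \<notin> gen (insert a X - {x})"
    proof (cases "x = a")
      case True
      then have "insert a X - {x} = X" using anX by auto
      then show ?thesis using aX True by simp
    next
      case False
      then have xX: "x \<in> X" using x by auto
      have eq: "insert a X - {x} = insert a (X - {x})" using False by auto
      show ?thesis
      proof
        assume "x \<in> gen (insert a X - {x})"
        then have "x \<in> gen (insert a (X - {x}))" using eq by simp
        then obtain p q where pq: "x = sup (inf a p) (inf (-a) q)" "p \<in> gen (X - {x})" "q \<in> gen (X - {x})"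
          by (rule gen_decomp)
        have qX: "q \<in> gen X" using pq(3) gen_mono[of "X - {x}" X] by blast
        have xgX: "x \<in> gen X" using xX gen_incl by blast
        define e where "e = sup (inf x (-q)) (inf q (-x))"
        have eX: "e \<in> gen X" unfolding e_def
          by (intro subD(3)[OF gen_sub] subD(4)[OF gen_sub] subD(5)[OF gen_sub] qX xgX)
        have "inf (-a) x = inf (-a) q" using pq(1) t1(2)[of a p q] by simp
        note hx = this
        have h1: "inf (-a) (inf x (-q)) = bot"
        proof -
          have "inf (-a) (inf x (-q)) = inf (inf (-a) x) (-q)" by (simp add: inf_assoc)
          also have "\<dots> = inf (inf (-a) q) (-q)" using hx by simp
          also have "\<dots> = bot" by (simp add: inf_assoc)
          finally show ?thesis .
        qed
        have h2: "inf (-a) (inf q (-x)) = bot"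
        proof -
          have "inf (-a) (inf q (-x)) = inf (inf (-a) q) (-x)" by (simp add: inf_assoc)
          also have "\<dots> = inf (inf (-a) x) (-x)" using hx by simp
          also have "\<dots> = bot" by (simp add: inf_assoc)
          finally show ?thesis .
        qed
        note h1 h2
        then have "inf (-a) e = bot" unfolding e_def by (simp add: inf_sup_distrib1)
        then have "e \<le> a" by (metis double_compl inf_commute inf_shunt)
        then have "e = bot" using nd eX by auto
        then have "inf x (-q) = bot" "inf q (-x) = bot" unfolding e_def by simp_all
        then have "x = q" by (metis antisym double_compl inf_shunt)
        then show False using pq(3) irrX xX unfolding irr_def by auto
      qed
    qed
  qed
  then show False using maxX anX by blast
qed



lemma un_le: "infinite S \<Longrightarrow> |A| \<le>o |S| \<Longrightarrow> |B| \<le>o |S| \<Longrightarrow> |A \<union> B| \<le>o |S|"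
  using card_of_Un_ordLeq_infinite_Field[of "|S|" A B] card_of_card_order_on[of S] Field_card_of[of S] by simp

lemma times_le: "infinite S \<Longrightarrow> |A| \<le>o |S| \<Longrightarrow> |B| \<le>o |S| \<Longrightarrow> |A \<times> B| \<le>o |S|"
proof -
  assume a: "infinite S" "|A| \<le>o |S|" "|B| \<le>o |S|"
  have "|A \<times> B| \<le>o |S \<times> B|" using card_of_Times_mono1 a(2) by blast
  also have "|S \<times> B| \<le>o |S \<times> S|" using card_of_Times_mono2 a(3) by blast
  also have "|S \<times> S| =o |S|" using card_of_Times_same_infinite a(1) by blast
  finally show ?thesis .
qed

lemma fin_le_inf: "finite A \<Longrightarrow> infinite B \<Longrightarrow> |A| \<le>o |B|"
proof -
  assume a: "finite A" "infinite B"
  obtain f :: "_ \<Rightarrow> nat" and n where "inj_on f A" using finite_imp_inj_to_nat_seg[OF a(1)] by blast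
  then have "|A| \<le>o |UNIV :: nat set|" using card_of_ordLeq by blast
  also have "|UNIV :: nat set| \<le>o |B|" using infinite_iff_card_of_nat a(2) by blast
  finally show ?thesis .
qed

fun clo :: "'a::boolean_algebra set \<Rightarrow> nat \<Rightarrow> 'a set" where
  "clo S 0 = S \<union> {bot, top}"
| "clo S (Suc n) = ((\<lambda>(a,b). sup a b) ` (clo S n \<times> clo S n) \<union> (\<lambda>(a,b). inf a b) ` (clo S n \<times> clo S n))
      \<union> uminus ` clo S n"

lemma clo_Suc_sub: "clo S n \<subseteq> clo S (Suc n)"
proof
  fix x assume "x \<in> clo S n"
  then have "x = (\<lambda>(a,b). sup a b) (x,x)" "(x,x) \<in> clo S n \<times> clo S n" by auto
  then show "x \<in> clo S (Suc n)" by (simp only: clo.simps) blast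
qed

lemma clo_mono: "m \<le> n \<Longrightarrow> clo S m \<subseteq> clo S n"
  by (induction n rule: dec_induct) (use clo_Suc_sub in blast)+

lemma gen_sub_clo: "gen S \<subseteq> (\<Union>n. clo S n)" (is "_ \<subseteq> ?U")
proof (rule gen_least)
  show "S \<subseteq> ?U" using clo.simps(1)[of S] by blast
  have two: "\<exists>n. a \<in> clo S n \<and> b \<in> clo S n" if AB: "a \<in> ?U" "b \<in> ?U" for a b
  proof -
    obtain m k where "a \<in> clo S m" "b \<in> clo S k" using AB by blast
    then show ?thesis using clo_mono[of m "max m k" S] clo_mono[of k "max m k" S] by auto
  qed
  show "?U \<in> ba_subalgebras"
  proof (rule subI)
    show "bot \<in> ?U" "top \<in> ?U" using clo.simps(1)[of S] by blast+
  next
    fix a b assume "a \<in> ?U" "b \<in> ?U"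
    then obtain n where n: "a \<in> clo S n" "b \<in> clo S n" using two by blast
    then have "sup a b \<in> clo S (Suc n)" by (simp only: clo.simps) blast
    then show "sup a b \<in> ?U" by blast
  next
    fix a b assume "a \<in> ?U" "b \<in> ?U"
    then obtain n where n: "a \<in> clo S n" "b \<in> clo S n" using two by blast
    then have "inf a b \<in> clo S (Suc n)" by (simp only: clo.simps) blast
    then show "inf a b \<in> ?U" by blast
  next
    fix a assume "a \<in> ?U"
    then obtain n where n: "a \<in> clo S n" by blast
    then have "- a \<in> clo S (Suc n)" by (simp only: clo.simps) blast
    then show "- a \<in> ?U" by blast
  qed
qed

lemma clo_card: "infinite S \<Longrightarrow> |clo S n| \<le>o |S|"
proof (induction n)
  case 0
  have a: "|{bot, top} :: 'a set| \<le>o |S|" by (rule fin_le_inf) (simp_all add: 0)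
  have b: "|S| \<le>o |S|" by (rule ordLeq_refl) (rule card_of_Card_order)
  show ?case unfolding clo.simps by (rule un_le[OF 0 b a])
next
  case (Suc n)
  note IH = Suc.IH[OF Suc.prems]
  have P: "|clo S n \<times> clo S n| \<le>o |S|" by (rule times_le[OF Suc.prems IH IH])
  have A: "|(\<lambda>(a,b). sup a b) ` (clo S n \<times> clo S n)| \<le>o |S|"
    by (rule ordLeq_transitive[OF card_of_image P])
  have B: "|(\<lambda>(a,b). inf a b) ` (clo S n \<times> clo S n)| \<le>o |S|"
    by (rule ordLeq_transitive[OF card_of_image P])
  have C: "|uminus ` clo S n| \<le>o |S|"
    by (rule ordLeq_transitive[OF card_of_image IH])
  show ?case unfolding clo.simps by (rule un_le[OF Suc.prems un_le[OF Suc.prems A B] C])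
qed

lemma gen_card: "infinite S \<Longrightarrow> |gen S| \<le>o |S|"
proof -
  assume inf: "infinite S"
  have "|\<Union>n. clo S n| \<le>o |S|"
    by (rule card_of_UNION_ordLeq_infinite[OF inf]) (use clo_card[OF inf] infinite_iff_card_of_nat inf in auto)
  then show ?thesis using card_of_mono1[OF gen_sub_clo] ordLeq_transitive by blast
qed



lemma ne_split:
  fixes a b :: "'a::boolean_algebra"
  assumes "a \<noteq> b"
  shows "inf a (-b) \<noteq> bot \<or> inf b (-a) \<noteq> bot"
proof (rule ccontr)
  assume "\<not> ?thesis"
  then have "a \<le> b" "b \<le> a" by (simp_all add: inf_shunt)
  then show False using assms by simp
qed

lemma finite_dense:
  fixes D :: "'a::boolean_algebra set"
  assumes fin: "finite D" and dense: "\<forall>a. a \<noteq> bot \<longrightarrow> (\<exists>d\<in>D. d \<noteq> bot \<and> d \<le> a)"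
  shows "finite (UNIV :: 'a set)"
proof -
  have key: "{d\<in>D. d \<le> a} \<noteq> {d\<in>D. d \<le> b}" if ab: "inf a (-b) \<noteq> bot" for a b :: 'a
  proof -
    obtain d where d: "d \<in> D" "d \<noteq> bot" "d \<le> inf a (-b)" using dense ab by blast
    have "\<not> d \<le> b"
    proof
      assume "d \<le> b"
      moreover have "d \<le> -b" using d(3) by simp
      ultimately have "d = bot" by (metis inf.absorb1 inf_shunt)
      then show False using d(2) by simp
    qed
    moreover have "d \<le> a" using d(3) by simp
    ultimately show ?thesis using d(1) by blast
  qed
  have "inj (\<lambda>a. {d\<in>D. d \<le> a})"
  proof (rule injI)
    fix a b :: 'a assume eq: "{d\<in>D. d \<le> a} = {d\<in>D. d \<le> b}"
    show "a = b"
    proof (rule ccontr)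
      assume "a \<noteq> b"
      then have "inf a (-b) \<noteq> bot \<or> inf b (-a) \<noteq> bot" by (rule ne_split)
      then show False using key[of a b] key[of b a] eq by metis
    qed
  qed
  moreover have "(\<lambda>a. {d\<in>D. d \<le> a}) ` UNIV \<subseteq> Pow D" by auto
  ultimately show ?thesis using fin by (meson finite_Pow_iff finite_subset inj_on_finite)
qed

lemma autD:
  assumes "f \<in> ba_automorphisms"
  shows "bij f" "f (sup x y) = sup (f x) (f y)" "f (inf x y) = inf (f x) (f y)"
    "f (- x) = - f x" "f bot = bot" "f top = top"
  using assms unfolding ba_automorphisms_def by auto

lemma aut_le_iff:
  assumes "f \<in> ba_automorphisms"
  shows "f x \<le> f y \<longleftrightarrow> x \<le> y"
proof -
  have inj: "inj f" using autD(1)[OF assms] bij_is_inj by blast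
  have "f x \<le> f y \<longleftrightarrow> inf (f x) (f y) = f x" by (simp add: inf.absorb_iff1)
  also have "\<dots> \<longleftrightarrow> f (inf x y) = f x" using autD(3)[OF assms] by simp
  also have "\<dots> \<longleftrightarrow> inf x y = x" using inj by (simp add: inj_eq)
  also have "\<dots> \<longleftrightarrow> x \<le> y" by (simp add: inf.absorb_iff1)
  finally show ?thesis .
qed

lemma agree_gen:
  assumes f: "f \<in> ba_automorphisms" and g: "g \<in> ba_automorphisms"
    and agree: "\<forall>x\<in>X. f x = g x"
  shows "\<forall>x\<in>gen X. f x = g x"
proof -
  have "gen X \<subseteq> {x. f x = g x}"
  proof (rule gen_least)
    show "X \<subseteq> {x. f x = g x}" using agree by auto
    show "{x. f x = g x} \<in> ba_subalgebras"
      by (rule subI) (simp_all add: autD[OF f] autD[OF g])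
  qed
  then show ?thesis by auto
qed

lemma aut_det_half:
  assumes f: "f \<in> ba_automorphisms" and g: "g \<in> ba_automorphisms"
    and agree: "\<forall>x\<in>D. f x = g x"
    and dense: "\<forall>a. a \<noteq> bot \<longrightarrow> (\<exists>d\<in>D. d \<noteq> bot \<and> d \<le> a)"
  shows "inf (f a) (- g a) = bot"
proof (rule ccontr)
  assume c: "inf (f a) (- g a) \<noteq> bot"
  have "surj f" using autD(1)[OF f] bij_is_surj by blast
  then obtain b where b: "f b = inf (f a) (- g a)" by (metis surjD)
  have "b \<noteq> bot" using b c autD(5)[OF f] by auto
  then obtain d where d: "d \<in> D" "d \<noteq> bot" "d \<le> b" using dense by blast
  have fd: "f d \<le> inf (f a) (- g a)" using d(3) b aut_le_iff[OF f] by metis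
  then have "f d \<le> f a" by simp
  then have da: "d \<le> a" using aut_le_iff[OF f] by blast
  have "g d \<le> - g a" using fd agree d(1) by simp
  then have "g d \<le> g (- a)" using autD(4)[OF g] by simp
  then have dna: "d \<le> - a" using aut_le_iff[OF g] by blast
  have "d = bot" using da dna by (metis inf.absorb1 inf_shunt)
  then show False using d(2) by simp
qed

lemma aut_det:
  assumes f: "f \<in> ba_automorphisms" and g: "g \<in> ba_automorphisms"
    and agree: "\<forall>x\<in>D. f x = g x"
    and dense: "\<forall>a. a \<noteq> bot \<longrightarrow> (\<exists>d\<in>D. d \<noteq> bot \<and> d \<le> a)"
  shows "f = g"
proof
  fix a
  have "inf (f a) (- g a) = bot" by (rule aut_det_half[OF f g agree dense])
  moreover have "inf (g a) (- f a) = bot" by (rule aut_det_half[OF g f _ dense]) (use agree in auto)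
  ultimately show "f a = g a" using ne_split by blast
qed

lemma irr_inj_gen:
  assumes "irr X"
  shows "inj_on gen (Pow X)"
proof -
  have sub: "Y \<subseteq> Y'" if Y: "Y \<subseteq> X" "Y' \<subseteq> X" "gen Y = gen Y'" for Y Y'
  proof
    fix y assume y: "y \<in> Y"
    show "y \<in> Y'"
    proof (rule ccontr)
      assume "y \<notin> Y'"
      then have "Y' \<subseteq> X - {y}" using Y by auto
      then have "gen Y' \<subseteq> gen (X - {y})" by (rule gen_mono)
      moreover have "y \<in> gen Y" using y gen_incl by blast
      ultimately have "y \<in> gen (X - {y})" using Y(3) by blast
      then show False using assms y Y(1) unfolding irr_def by blast
    qed
  qed
  show ?thesis
    unfolding inj_on_def by (metis PowD sub subset_antisym)
qed


theorem mainTheorem5: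
  assumes "infinite (UNIV :: 'a::boolean_algebra set)"
  shows "|ba_automorphisms :: ('a \<Rightarrow> 'a) set| \<le>o |ba_subalgebras :: 'a set set|"
proof -
  obtain X :: "'a set" where irrX: "irr X" and maxX: "\<forall>Y. irr Y \<longrightarrow> X \<subseteq> Y \<longrightarrow> Y = X"
    using max_irr_exists by blast
  have dense: "\<forall>a. a \<noteq> bot \<longrightarrow> (\<exists>d\<in>gen X. d \<noteq> bot \<and> d \<le> a)"
    using max_irr_dense[OF irrX maxX] by blast
  have infX: "infinite X"
  proof
    assume "finite X"
    then have "finite (gen X)" by (rule finite_gen)
    then have "finite (UNIV::'a set)" using finite_dense dense by blast
    then show False using assms by simp
  qed
  define Sub where "Sub = (ba_subalgebras :: 'a set set)"
  have PS: "|Pow X| \<le>o |Sub|"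
  proof (rule card_of_ordLeqI[of gen])
    show "inj_on gen (Pow X)" by (rule irr_inj_gen[OF irrX])
    show "\<And>Y. Y \<in> Pow X \<Longrightarrow> gen Y \<in> Sub" unfolding Sub_def by (rule gen_sub)
  qed
  have infSub: "infinite Sub"
    using card_of_ordLeq_infinite[OF PS] infX by simp
  have XX: "|X \<times> X| \<le>o |X|"
    using card_of_Times_same_infinite[OF infX] ordIso_iff_ordLeq by blast
  then obtain h where h: "inj_on h (X \<times> X)" "h ` (X \<times> X) \<subseteq> X"
    using card_of_ordLeq[of "X \<times> X" X] by blast
  have P2: "|Pow (X \<times> X)| \<le>o |Pow X|"
  proof (rule card_of_ordLeqI[of "image h"])
    show "inj_on (image h) (Pow (X \<times> X))" by (rule inj_on_image_Pow[OF h(1)])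
    show "\<And>Y. Y \<in> Pow (X \<times> X) \<Longrightarrow> h ` Y \<in> Pow X" using h(2) by auto
  qed
  have FP: "|Func X X| \<le>o |Pow (X \<times> X)|"
  proof (rule card_of_ordLeqI[of "\<lambda>g. {(x, g x) | x. x \<in> X}"])
    show "inj_on (\<lambda>g. {(x, g x) | x. x \<in> X}) (Func X X)"
    proof (rule inj_onI)
      fix g1 g2 assume g: "g1 \<in> Func X X" "g2 \<in> Func X X"
        and eq: "{(x, g1 x) | x. x \<in> X} = {(x, g2 x) | x. x \<in> X}"
      show "g1 = g2"
      proof
        fix x
        show "g1 x = g2 x"
        proof (cases "x \<in> X")
          case True
          then have "(x, g1 x) \<in> {(x, g2 x) | x. x \<in> X}" using eq by blast
          then show ?thesis by blast
        next
          case False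
          then show ?thesis using g unfolding Func_def by simp
        qed
      qed
    qed
    show "\<And>g. g \<in> Func X X \<Longrightarrow> {(x, g x) | x. x \<in> X} \<in> Pow (X \<times> X)"
      unfolding Func_def by auto
  qed
  have FS: "|Func X X| \<le>o |Sub|"
    using ordLeq_transitive[OF FP ordLeq_transitive[OF P2 PS]] .
  have SS: "|Sub \<times> Func X X| \<le>o |Sub|"
    by (rule times_le[OF infSub ordLeq_refl[OF card_of_Card_order] FS])
  define T where "T f = gen (f ` X)" for f :: "'a \<Rightarrow> 'a"
  define c where "c S = (SOME c. inj_on c S \<and> c ` S \<subseteq> X)" for S :: "'a set"
  define \<Phi> where "\<Phi> f = (T f, \<lambda>x. if x \<in> X then c (T f) (f x) else undefined)" for f :: "'a \<Rightarrow> 'a"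
  have cT: "inj_on (c (T f)) (T f) \<and> c (T f) ` (T f) \<subseteq> X" if f: "f \<in> ba_automorphisms" for f
  proof -
    have "inj f" using autD(1)[OF f] bij_is_inj by blast
    then have "infinite (f ` X)" using infX finite_imageD inj_on_subset by blast
    then have "|T f| \<le>o |f ` X|" unfolding T_def by (rule gen_card)
    then have "|T f| \<le>o |X|" using card_of_image ordLeq_transitive by blast
    then have "\<exists>c. inj_on c (T f) \<and> c ` (T f) \<subseteq> X" using card_of_ordLeq by blast
    then show ?thesis unfolding c_def by (rule someI_ex)
  qed
  have fXT: "f x \<in> T f" if "x \<in> X" for f x
    using that gen_incl unfolding T_def by blast
  have "|ba_automorphisms :: ('a \<Rightarrow> 'a) set| \<le>o |Sub \<times> Func X X|"
  proof (rule card_of_ordLeqI[of \<Phi>])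
    show "inj_on \<Phi> ba_automorphisms"
    proof (rule inj_onI)
      fix f g :: "'a \<Rightarrow> 'a" assume f: "f \<in> ba_automorphisms" and g: "g \<in> ba_automorphisms"
        and eq: "\<Phi> f = \<Phi> g"
      have Teq: "T f = T g" using eq unfolding \<Phi>_def by simp
      have agX: "\<forall>x\<in>X. f x = g x"
      proof
        fix x assume x: "x \<in> X"
        have "c (T f) (f x) = c (T g) (g x)"
          using fun_cong[OF arg_cong[OF eq, of snd], of x] x unfolding \<Phi>_def by simp
        then have "c (T f) (f x) = c (T f) (g x)" using Teq by simp
        moreover have "f x \<in> T f" "g x \<in> T f" using fXT x Teq by auto
        ultimately show "f x = g x" using cT[OF f] inj_on_def by metis
      qed
      have "\<forall>x\<in>gen X. f x = g x" by (rule agree_gen[OF f g agX])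
      then show "f = g" by (rule aut_det[OF f g _ dense])
    qed
    show "\<And>f. f \<in> ba_automorphisms \<Longrightarrow> \<Phi> f \<in> Sub \<times> Func X X"
    proof -
      fix f :: "'a \<Rightarrow> 'a" assume f: "f \<in> ba_automorphisms"
      have "T f \<in> Sub" unfolding T_def Sub_def by (rule gen_sub)
      moreover have "(\<lambda>x. if x \<in> X then c (T f) (f x) else undefined) \<in> Func X X"
        unfolding Func_def using cT[OF f] fXT by auto
      ultimately show "\<Phi> f \<in> Sub \<times> Func X X" unfolding \<Phi>_def by simp
    qed
  qed
  then show ?thesis using SS ordLeq_transitive unfolding Sub_def by blast
qed

end
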